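(* If $e$ is an NLPCF program (i.e. $e\in\mathcal{P}\!\mathit{rog}^{NL}(\tau)$ for some type $\tau$) and $e\not\rightsquigarrow$, then $e$ is in canonical form.
   Context: NLPCF is LPCF extended with non-determinism. Types: $\tau ::= \mathsf{Nat}\mid\mathsf{Bool}\mid \tau\,\&\,\tau' \mid \tau\otimes\tau' \mid \tau\multimap\tau' \mid \tau\to\tau'\mid\mathsf{T}\tau$. Terms: $e ::= x \mid \mathtt{0},\mathtt{1},\dots \mid \mathtt{succ}\mid\mathtt{pred}\mid\mathtt{iszero} \mid \lambda x.e \mid e\,e' \mid \mathtt{true}\mid\mathtt{false} \mid \mathtt{if}\ e_1\ \mathtt{then}\ e_2\ \mathtt{else}\ e_3 \mid \langle e_1,e_2\rangle \mid \mathtt{proj}_i(e) \mid \mathtt{fix}_\tau \mid e_1\otimes e_2 \mid \mathtt{let}\ x\otimes y = e\ \mathtt{in}\ e' \mid \mathtt{val}(e)\mid \mathtt{bind}\ x\Leftarrow e\ \mathtt{in}\ e'\mid e\sqcap e'$, up to $\alpha$-equivalence ($\lambda$, $\mathtt{let}$, $\mathtt{bind}$ bind variables), with capture-avoiding substitution. Typing judgements $\Gamma;\Delta\vdash e:\tau$ ($\Gamma$ non-linear, $\Delta$ linear environments, disjoint domains; $\Delta,\Delta'$ disjoint union): $\Gamma;\emptyset\vdash x:\tau$ if $x:\tau\in\Gamma$; $\Gamma;x:\tau\vdash x:\tau$ if $x\notin\Gamma$; $\Gamma;\emptyset\vdash\mathtt{fix}_\tau:(\tau\to\tau)\to\tau$;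 numerals $:\mathsf{Nat}$, $\mathtt{true},\mathtt{false}:\mathsf{Bool}$, $\mathtt{succ},\mathtt{pred}:\mathsf{Nat}\multimap\mathsf{Nat}$, $\mathtt{iszero}:\mathsf{Nat}\multimap\mathsf{Bool}$ (all with empty $\Delta$); from $\Gamma;\Delta\vdash e_1:\mathsf{Bool}$, $\Gamma;\Delta'\vdash e_2:\tau$, $\Gamma;\Delta'\vdash e_3:\tau$ infer $\Gamma;\Delta,\Delta'\vdash\mathtt{if}\ e_1\ \mathtt{then}\ e_2\ \mathtt{else}\ e_3:\tau$; from $\Gamma;\Delta\vdash e_i:\tau_i$ infer $\Gamma;\Delta\vdash\langle e_1,e_2\rangle:\tau_1\&\tau_2$; from $\Gamma;\Delta\vdash e:\tau_1\&\tau_2$ infer $\Gamma;\Delta\vdash\mathtt{proj}_i(e):\tau_i$; from $\Gamma;\Delta_i\vdash e_i:\tau_i$ infer $\Gamma;\Delta_1,\Delta_2\vdash e_1\otimes e_2:\tau_1\otimes\tau_2$; from $\Gamma;\Delta,x:\tau_1,y:\tau_2\vdash e:\tau$ and $\Gamma;\Delta'\vdash e':\tau_1\otimes\tau_2$ infer $\Gamma;\Delta,\Delta'\vdash\mathtt{let}\ x\otimes y=e'\ \mathtt{in}\ e:\tau$; from $\Gamma,x:\tau;\Delta\vdash e:\tau'$ infer $\Gamma;\Delta\vdash\lambda x.e:\tau\to\tau'$; from $\Gamma;\Delta\vdash e:\tau'\to\tau$, $\Gamma;\emptyset\vdash e':\tau'$ infer $\Gamma;\Delta\vdash e\,e':\tau$;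 from $\Gamma;\Delta,x:\tau\vdash e:\tau'$ infer $\Gamma;\Delta\vdash\lambda x.e:\tau\multimap\tau'$; from $\Gamma;\Delta\vdash e:\tau'\multimap\tau$, $\Gamma;\Delta'\vdash e':\tau'$ infer $\Gamma;\Delta,\Delta'\vdash e\,e':\tau$; from $\Gamma;\Delta\vdash e:\tau$ infer $\Gamma;\Delta\vdash\mathtt{val}(e):\mathsf{T}\tau$; from $\Gamma;\emptyset\vdash e_1:\mathsf{T}\tau_1$ and $\Gamma,x:\tau_1;\Delta\vdash e_2:\mathsf{T}\tau_2$ infer $\Gamma;\Delta\vdash\mathtt{bind}\ x\Leftarrow e_1\ \mathtt{in}\ e_2:\mathsf{T}\tau_2$; from $\Gamma;\Delta\vdash e_1:\mathsf{T}\tau_1$ and $\Gamma;\Delta',x:\tau_1\vdash e_2:\mathsf{T}\tau_2$ infer $\Gamma;\Delta,\Delta'\vdash\mathtt{bind}\ x\Leftarrow e_1\ \mathtt{in}\ e_2:\mathsf{T}\tau_2$; from $\Gamma;\Delta\vdash e_i:\mathsf{T}\tau$ ($i=1,2$) infer $\Gamma;\Delta\vdash e_1\sqcap e_2:\mathsf{T}\tau$. $\mathcal{P}\!\mathit{rog}^{NL}(\tau)=\{e\mid\emptyset;\emptyset\vdash e:\tau\}$. One-step reduction $\rightsquigarrow$: least relation containing $(\lambda x.e)e'\rightsquigarrow e[e'/x]$; $\mathtt{fix}_\tau\,e\rightsquigarrow e(\mathtt{fix}_\tau\,e)$; $\mathtt{succ}\,n\rightsquigarrow n+1$; $\mathtt{pred}\,0\rightsquigarrow0$;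 $\mathtt{pred}\,n\rightsquigarrow n-1$ ($n\ge1$); $\mathtt{iszero}\,0\rightsquigarrow\mathtt{true}$; $\mathtt{iszero}\,n\rightsquigarrow\mathtt{false}$ ($n\ge1$); $\mathtt{if}\ \mathtt{true}\ \mathtt{then}\ e_1\ \mathtt{else}\ e_2\rightsquigarrow e_1$; $\mathtt{if}\ \mathtt{false}\ \mathtt{then}\ e_1\ \mathtt{else}\ e_2\rightsquigarrow e_2$; $\mathtt{proj}_i\langle e_1,e_2\rangle\rightsquigarrow e_i$; $\mathtt{let}\ x\otimes y=e_1\otimes e_2\ \mathtt{in}\ e\rightsquigarrow e[e_1/x,e_2/y]$; $\mathtt{bind}\ x\Leftarrow\mathtt{val}(e')\ \mathtt{in}\ e\rightsquigarrow(\lambda x.e)e'$ when $e'\not\rightsquigarrow$; $e_1\sqcap e_2\rightsquigarrow e_i$ ($i=1,2$); closed under $\mathcal{E}[e_1]\rightsquigarrow\mathcal{E}[e_2]$ for evaluation contexts $\mathcal{E}::=[\,]\mid\mathtt{succ}(\mathcal{E})\mid\mathtt{pred}(\mathcal{E})\mid\mathtt{iszero}(\mathcal{E})\mid\mathcal{E}\,e\mid\mathtt{if}\ \mathcal{E}\ \mathtt{then}\ e_1\ \mathtt{else}\ e_2\mid\mathtt{proj}_i(\mathcal{E})\mid\mathtt{let}\ x\otimes y=\mathcal{E}\ \mathtt{in}\ e\mid\mathtt{bind}\ x\Leftarrow\mathcal{E}\ \mathtt{in}\ e\mid\mathtt{val}(\mathcal{E})$. Canonical forms: $\mathtt{succ},\mathtt{pred},\mathtt{iszero},\mathtt{true},\mathtt{false}$,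 numerals, $\mathtt{fix}_\tau$, $\langle e,e'\rangle$, $e\otimes e'$, $\lambda x.e$, and $\mathtt{val}(v)$ with $v\not\rightsquigarrow$. *)

theory Defs
  imports Main
begin

datatype ty = TNat | TBool | With ty ty | Tens ty ty | Lolli ty ty | Arr ty ty | TT ty

(* Binders: Lam binds index 0 in its body;
   LetT e b  is  let x (x) y = e in b, where in b index 1 is x and index 0 is y;
   Bind e1 e2 is bind x <= e1 in e2, where in e2 index 0 is x. *)
datatype tm =
    Var nat
  | Num nat
  | Succ | Pred | Iszero
  | Lam tm
  | App tm tm
  | Tt | Ff
  | If tm tm tm
  | Pair tm tm
  | Proj1 tm | Proj2 tm
  | Fix ty
  | Tensor tm tm
  | LetT tm tm
  | Val tm
  | Bind tm tm
  | Choice tm tm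

primrec lift :: "nat \<Rightarrow> tm \<Rightarrow> tm" where
  "lift k (Var n) = Var (if n < k then n else Suc n)"
| "lift k (Num n) = Num n"
| "lift k Succ = Succ"
| "lift k Pred = Pred"
| "lift k Iszero = Iszero"
| "lift k (Lam e) = Lam (lift (Suc k) e)"
| "lift k (App e1 e2) = App (lift k e1) (lift k e2)"
| "lift k Tt = Tt"
| "lift k Ff = Ff"
| "lift k (If e1 e2 e3) = If (lift k e1) (lift k e2) (lift k e3)"
| "lift k (Pair e1 e2) = Pair (lift k e1) (lift k e2)"
| "lift k (Proj1 e) = Proj1 (lift k e)"
| "lift k (Proj2 e) = Proj2 (lift k e)"
| "lift k (Fix t) = Fix t"
| "lift k (Tensor e1 e2) = Tensor (lift k e1) (lift k e2)"
| "lift k (LetT e1 e2) = LetT (lift k e1) (lift (Suc (Suc k)) e2)"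
| "lift k (Val e) = Val (lift k e)"
| "lift k (Bind e1 e2) = Bind (lift k e1) (lift (Suc k) e2)"
| "lift k (Choice e1 e2) = Choice (lift k e1) (lift k e2)"

definition up :: "(nat \<Rightarrow> tm) \<Rightarrow> nat \<Rightarrow> tm" where
  "up \<sigma> n = (case n of 0 \<Rightarrow> Var 0 | Suc m \<Rightarrow> lift 0 (\<sigma> m))"

primrec subst :: "(nat \<Rightarrow> tm) \<Rightarrow> tm \<Rightarrow> tm" where
  "subst \<sigma> (Var n) = \<sigma> n"
| "subst \<sigma> (Num n) = Num n"
| "subst \<sigma> Succ = Succ"
| "subst \<sigma> Pred = Pred"
| "subst \<sigma> Iszero = Iszero"
| "subst \<sigma> (Lam e) = Lam (subst (up \<sigma>) e)"
| "subst \<sigma> (App e1 e2) = App (subst \<sigma> e1) (subst \<sigma> e2)"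
| "subst \<sigma> Tt = Tt"
| "subst \<sigma> Ff = Ff"
| "subst \<sigma> (If e1 e2 e3) = If (subst \<sigma> e1) (subst \<sigma> e2) (subst \<sigma> e3)"
| "subst \<sigma> (Pair e1 e2) = Pair (subst \<sigma> e1) (subst \<sigma> e2)"
| "subst \<sigma> (Proj1 e) = Proj1 (subst \<sigma> e)"
| "subst \<sigma> (Proj2 e) = Proj2 (subst \<sigma> e)"
| "subst \<sigma> (Fix t) = Fix t"
| "subst \<sigma> (Tensor e1 e2) = Tensor (subst \<sigma> e1) (subst \<sigma> e2)"
| "subst \<sigma> (LetT e1 e2) = LetT (subst \<sigma> e1) (subst (up (up \<sigma>)) e2)"
| "subst \<sigma> (Val e) = Val (subst \<sigma> e)"
| "subst \<sigma> (Bind e1 e2) = Bind (subst \<sigma> e1) (subst (up \<sigma>) e2)"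
| "subst \<sigma> (Choice e1 e2) = Choice (subst \<sigma> e1) (subst \<sigma> e2)"

definition subst1 :: "tm \<Rightarrow> tm \<Rightarrow> tm" where
  "subst1 a e = subst (\<lambda>n. case n of 0 \<Rightarrow> a | Suc m \<Rightarrow> Var m) e"

definition subst2 :: "tm \<Rightarrow> tm \<Rightarrow> tm \<Rightarrow> tm" where
  "subst2 a b e = subst (\<lambda>n. case n of 0 \<Rightarrow> b | Suc 0 \<Rightarrow> a | Suc (Suc m) \<Rightarrow> Var m) e"

datatype mode = NL | Lin

text \<open>A combined environment: index i is either absent, in the non-linear
  environment Gamma (NL), or in the linear environment Delta (Lin).
  This builds in disjointness of the domains of Gamma and Delta.\<close>
type_synonym env = "nat \<Rightarrow> (mode \<times> ty) option"

definition lin_empty :: "env \<Rightarrow> bool" where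
  "lin_empty E \<longleftrightarrow> (\<forall>i t. E i \<noteq> Some (Lin, t))"

definition nl_part :: "env \<Rightarrow> env" where
  "nl_part E = (\<lambda>i. case E i of Some (NL, t) \<Rightarrow> Some (NL, t) | _ \<Rightarrow> None)"

definition split :: "env \<Rightarrow> env \<Rightarrow> env \<Rightarrow> bool" where
  "split E E1 E2 \<longleftrightarrow> (\<forall>i. case E i of
       None \<Rightarrow> E1 i = None \<and> E2 i = None
     | Some (NL, t) \<Rightarrow> E1 i = Some (NL, t) \<and> E2 i = Some (NL, t)
     | Some (Lin, t) \<Rightarrow> (E1 i = Some (Lin, t) \<and> E2 i = None) \<or> (E1 i = None \<and> E2 i = Some (Lin, t)))"

definition ext :: "env \<Rightarrow> mode \<Rightarrow> ty \<Rightarrow> env" where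
  "ext E m t = (\<lambda>i. case i of 0 \<Rightarrow> Some (m, t) | Suc j \<Rightarrow> E j)"

inductive has_type :: "env \<Rightarrow> tm \<Rightarrow> ty \<Rightarrow> bool" where
  T_var_nl: "E i = Some (NL, t) \<Longrightarrow> lin_empty E \<Longrightarrow> has_type E (Var i) t"
| T_var_lin: "E i = Some (Lin, t) \<Longrightarrow> (\<forall>j t'. j \<noteq> i \<longrightarrow> E j \<noteq> Some (Lin, t')) \<Longrightarrow> has_type E (Var i) t"
| T_fix: "lin_empty E \<Longrightarrow> has_type E (Fix t) (Arr (Arr t t) t)"
| T_num: "lin_empty E \<Longrightarrow> has_type E (Num n) TNat"
| T_tt: "lin_empty E \<Longrightarrow> has_type E Tt TBool"
| T_ff: "lin_empty E \<Longrightarrow> has_type E Ff TBool"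
| T_succ: "lin_empty E \<Longrightarrow> has_type E Succ (Lolli TNat TNat)"
| T_pred: "lin_empty E \<Longrightarrow> has_type E Pred (Lolli TNat TNat)"
| T_iszero: "lin_empty E \<Longrightarrow> has_type E Iszero (Lolli TNat TBool)"
| T_ite: "split E E1 E2 \<Longrightarrow> has_type E1 e1 TBool \<Longrightarrow> has_type E2 e2 t \<Longrightarrow> has_type E2 e3 t \<Longrightarrow> has_type E (If e1 e2 e3) t"
| T_pair: "has_type E e1 t1 \<Longrightarrow> has_type E e2 t2 \<Longrightarrow> has_type E (Pair e1 e2) (With t1 t2)"
| T_proj1: "has_type E e (With t1 t2) \<Longrightarrow> has_type E (Proj1 e) t1"
| T_proj2: "has_type E e (With t1 t2) \<Longrightarrow> has_type E (Proj2 e) t2"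
| T_tensor: "split E E1 E2 \<Longrightarrow> has_type E1 e1 t1 \<Longrightarrow> has_type E2 e2 t2 \<Longrightarrow> has_type E (Tensor e1 e2) (Tens t1 t2)"
| T_lett: "split E E1 E2 \<Longrightarrow> has_type (ext (ext E1 Lin t1) Lin t2) e t \<Longrightarrow> has_type E2 e' (Tens t1 t2)
         \<Longrightarrow> has_type E (LetT e' e) t"
| T_lam_nl: "has_type (ext E NL t) e t' \<Longrightarrow> has_type E (Lam e) (Arr t t')"
| T_app_nl: "has_type E e (Arr t' t) \<Longrightarrow> has_type (nl_part E) e' t' \<Longrightarrow> has_type E (App e e') t"
| T_lam_lin: "has_type (ext E Lin t) e t' \<Longrightarrow> has_type E (Lam e) (Lolli t t')"
| T_app_lin: "split E E1 E2 \<Longrightarrow> has_type E1 e (Lolli t' t) \<Longrightarrow> has_type E2 e' t' \<Longrightarrow> has_type E (App e e') t"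
| T_val: "has_type E e t \<Longrightarrow> has_type E (Val e) (TT t)"
| T_bind_nl: "has_type (nl_part E) e1 (TT t1) \<Longrightarrow> has_type (ext E NL t1) e2 (TT t2) \<Longrightarrow> has_type E (Bind e1 e2) (TT t2)"
| T_bind_lin: "split E E1 E2 \<Longrightarrow> has_type E1 e1 (TT t1) \<Longrightarrow> has_type (ext E2 Lin t1) e2 (TT t2)
         \<Longrightarrow> has_type E (Bind e1 e2) (TT t2)"
| T_choice: "has_type E e1 (TT t) \<Longrightarrow> has_type E e2 (TT t) \<Longrightarrow> has_type E (Choice e1 e2) (TT t)"

definition Prog :: "ty \<Rightarrow> tm set" where
  "Prog t = {e. has_type (\<lambda>_. None) e t}"

fun app_head :: "tm \<Rightarrow> tm \<Rightarrow> tm set" where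
  "app_head (Lam e) a = {subst1 a e}"
| "app_head (Fix t) a = {App a (App (Fix t) a)}"
| "app_head Succ (Num n) = {Num (Suc n)}"
| "app_head Pred (Num 0) = {Num 0}"
| "app_head Pred (Num (Suc n)) = {Num n}"
| "app_head Iszero (Num 0) = {Tt}"
| "app_head Iszero (Num (Suc n)) = {Ff}"
| "app_head _ _ = {}"

text \<open>It is defined by recursion on
  the size of e: each clause collects the basic rules applying at the root and
  the closure under the evaluation-context frames of the given shape
  (succ(E), pred(E), iszero(E), E e, if E .., proj_i(E), let .. = E in e,
  bind x <= E in e, val(E)). The side condition "e' does not reduce" of the
  bind rule refers to the strict subterm e'.\<close>
function red :: "tm \<Rightarrow> tm set" where
  "red (Var n) = {}"
| "red (Num n) = {}"
| "red Succ = {}"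
| "red Pred = {}"
| "red Iszero = {}"
| "red (Lam e) = {}"
| "red (App f a) = app_head f a \<union> (\<lambda>f'. App f' a) ` red f
      \<union> (if f = Succ \<or> f = Pred \<or> f = Iszero then App f ` red a else {})"
| "red Tt = {}"
| "red Ff = {}"
| "red (If c a b) = (if c = Tt then {a} else {}) \<union> (if c = Ff then {b} else {})
      \<union> (\<lambda>c'. If c' a b) ` red c"
| "red (Pair a b) = {}"
| "red (Proj1 e) = (case e of Pair a b \<Rightarrow> {a} | _ \<Rightarrow> {}) \<union> Proj1 ` red e"
| "red (Proj2 e) = (case e of Pair a b \<Rightarrow> {b} | _ \<Rightarrow> {}) \<union> Proj2 ` red e"
| "red (Fix t) = {}"
| "red (Tensor a b) = {}"
| "red (LetT e b) = (case e of Tensor x y \<Rightarrow> {subst2 x y b} | _ \<Rightarrow> {}) \<union> (\<lambda>e'. LetT e' b) ` red e"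
| "red (Val e) = Val ` red e"
| "red (Bind e1 e2) = (case e1 of Val v \<Rightarrow> (if red v = {} then {App (Lam e2) v} else {}) | _ \<Rightarrow> {})
      \<union> (\<lambda>e'. Bind e' e2) ` red e1"
| "red (Choice a b) = {a, b}"
  by pat_completeness auto
termination by size_change

definition step :: "tm \<Rightarrow> tm \<Rightarrow> bool" (infix "\<leadsto>" 50) where
  "e \<leadsto> e' \<longleftrightarrow> e' \<in> red e"

datatype ectx = Hole | CSucc ectx | CPred ectx | CIszero ectx | CApp ectx tm
  | CIf ectx tm tm | CProj1 ectx | CProj2 ectx | CLet ectx tm | CBind ectx tm | CVal ectx

primrec plug :: "ectx \<Rightarrow> tm \<Rightarrow> tm" where
  "plug Hole e = e"
| "plug (CSucc E) e = App Succ (plug E e)"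
| "plug (CPred E) e = App Pred (plug E e)"
| "plug (CIszero E) e = App Iszero (plug E e)"
| "plug (CApp E a) e = App (plug E e) a"
| "plug (CIf E a b) e = If (plug E e) a b"
| "plug (CProj1 E) e = Proj1 (plug E e)"
| "plug (CProj2 E) e = Proj2 (plug E e)"
| "plug (CLet E b) e = LetT (plug E e) b"
| "plug (CBind E b) e = Bind (plug E e) b"
| "plug (CVal E) e = Val (plug E e)"

lemma step_plug: "e1 \<leadsto> e2 \<Longrightarrow> plug E e1 \<leadsto> plug E e2"
  by (induction E) (auto simp: step_def)

definition canonical :: "tm \<Rightarrow> bool" where
  "canonical e \<longleftrightarrow> e = Succ \<or> e = Pred \<or> e = Iszero \<or> e = Tt \<or> e = Ff
     \<or> (\<exists>n. e = Num n) \<or> (\<exists>t. e = Fix t) \<or> (\<exists>a b. e = Pair a b)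
     \<or> (\<exists>a b. e = Tensor a b) \<or> (\<exists>b. e = Lam b)
     \<or> (\<exists>v. e = Val v \<and> \<not> (\<exists>v'. v \<leadsto> v'))"

end

theory Submission
  imports Defs
begin

inductive_cases tyNum: "has_type E (Num n) t"
inductive_cases tySucc: "has_type E Succ t"
inductive_cases tyPred: "has_type E Pred t"
inductive_cases tyIsz: "has_type E Iszero t"
inductive_cases tyTt: "has_type E Tt t"
inductive_cases tyFf: "has_type E Ff t"
inductive_cases tyFix: "has_type E (Fix s) t"
inductive_cases tyPair: "has_type E (Pair a b) t"
inductive_cases tyTensor: "has_type E (Tensor a b) t"
inductive_cases tyLam: "has_type E (Lam b) t"
inductive_cases tyVal: "has_type E (Val b) t"
inductive_cases tyVar: "has_type E (Var i) t"

lemmas tyinv = tyNum tySucc tyPred tyIsz tyTt tyFf tyFix tyPair tyTensor tyLam tyVal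

lemma split_empty: "split (\<lambda>_. None) E1 E2 \<Longrightarrow> E1 = (\<lambda>_. None) \<and> E2 = (\<lambda>_. None)"
  unfolding split_def by (auto simp: fun_eq_iff)

lemma nl_empty: "nl_part (\<lambda>_. None) = (\<lambda>_. None)"
  unfolding nl_part_def by auto

lemma canon_nat: "canonical e \<Longrightarrow> has_type E e TNat \<Longrightarrow> \<exists>n. e = Num n"
  unfolding canonical_def by (auto elim: tyinv)

lemma canon_bool: "canonical e \<Longrightarrow> has_type E e TBool \<Longrightarrow> e = Tt \<or> e = Ff"
  unfolding canonical_def by (auto elim: tyinv)

lemma canon_with: "canonical e \<Longrightarrow> has_type E e (With a b) \<Longrightarrow> \<exists>x y. e = Pair x y"
  unfolding canonical_def by (auto elim: tyinv)

lemma canon_tens: "canonical e \<Longrightarrow> has_type E e (Tens a b) \<Longrightarrow> \<exists>x y. e = Tensor x y"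
  unfolding canonical_def by (auto elim: tyinv)

lemma canon_T: "canonical e \<Longrightarrow> has_type E e (TT a) \<Longrightarrow> \<exists>v. e = Val v \<and> red v = {}"
  unfolding canonical_def step_def by (auto elim: tyinv)

lemma canon_arr: "canonical e \<Longrightarrow> has_type E e (Arr a b) \<Longrightarrow> (\<exists>x. e = Lam x) \<or> (\<exists>s. e = Fix s)"
  unfolding canonical_def by (auto elim: tyinv)

lemma canon_lolli: "canonical e \<Longrightarrow> has_type E e (Lolli a b) \<Longrightarrow>
   (\<exists>x. e = Lam x) \<or> (e = Succ \<and> a = TNat) \<or> (e = Pred \<and> a = TNat) \<or> (e = Iszero \<and> a = TNat)"
  unfolding canonical_def by (auto elim: tyinv)

lemma progress: "has_type E e t \<Longrightarrow> E = (\<lambda>_. None) \<Longrightarrow> red e = {} \<Longrightarrow> canonical e"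
proof (induction rule: has_type.induct)
  case (T_ite E E1 E2 e1 e2 t e3)
  then show ?case using split_empty[of E1 E2] canon_bool[of e1 E1]
    by (auto split: if_splits)
next
  case (T_proj1 E e t1 t2)
  then show ?case using canon_with[of e E t1 t2] by auto
next
  case (T_proj2 E e t1 t2)
  then show ?case using canon_with[of e E t1 t2] by auto
next
  case (T_lett E E1 E2 t1 t2 e t e')
  then show ?case using split_empty[of E1 E2] canon_tens[of e' E2 t1 t2] by auto
next
  case (T_app_nl E e t' t e')
  then show ?case using canon_arr[of e E t' t] by auto
next
  case (T_app_lin E E1 E2 e t' t e')
  then show ?case using split_empty[of E1 E2] canon_lolli[of e E1 t' t] canon_nat[of e' E2]
    by (auto split: if_splits nat.splits elim: app_head.elims)
next
  case (T_val E e t)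
  then show ?case by (auto simp: canonical_def step_def)
next
  case (T_bind_nl E e1 t1 e2 t2)
  then show ?case using canon_T[of e1 "nl_part E" t1] nl_empty by (auto split: if_splits)
next
  case (T_bind_lin E E1 E2 e1 t1 e2 t2)
  then show ?case using split_empty[of E1 E2] canon_T[of e1 E1 t1] by (auto split: if_splits)
qed (auto simp: canonical_def)

theorem proposition4:
  fixes e :: tm and \<tau> :: ty
  assumes "e \<in> Prog \<tau>"
    and "\<not> (\<exists>e'. e \<leadsto> e')"
  shows "canonical e"
  using progress[of "\<lambda>_. None" e \<tau>] assms unfolding Prog_def step_def by auto

end
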